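(* There exist finite-dimensional real representations $V$ and $U$ of $SL(2,\mathbb{R})$, an $SL(2,\mathbb{R})$-invariant subset $D\subseteq V$, a continuous $SL(2,\mathbb{R})$-equivariant function $F:D\to U$, and a compact subset $K\subseteq D$ such that there is no sequence of functions of the form $h_k\cdot P_k$, with $P_k:V\to U$ an $SL(2,\mathbb{R})$-equivariant polynomial map and $h_k:D\to\mathbb{R}$ an $SL(2,\mathbb{R})$-invariant function, that converges pointwise to $F$ on $K$.
   Context: A map $F$ between sets on which $SL(2,\mathbb{R})$ acts (linearly on representations) is equivariant if $F(g\cdot v)=g\cdot F(v)$ for all $g\in SL(2,\mathbb{R})$ and $v$ in its domain; a real-valued function $h$ is invariant if $h(g\cdot v)=h(v)$. *)

theory Defs
  imports "HOL-Analysis.Analysis"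
begin

definition SL2 :: "(real^2^2) set" where
  "SL2 = {g. det g = 1}"

text \<open>An n-dimensional real vector space R^n, realised as functions
  nat => real vanishing from index n on (topology: product topology,
  which on this subspace is the Euclidean topology).\<close>
definition vspace :: "nat \<Rightarrow> (nat \<Rightarrow> real) set" where
  "vspace n = {v. \<forall>i\<ge>n. v i = 0}"

definition act :: "nat \<Rightarrow> (nat \<Rightarrow> nat \<Rightarrow> real) \<Rightarrow> (nat \<Rightarrow> real) \<Rightarrow> (nat \<Rightarrow> real)" where
  "act n A v = (\<lambda>i. if i < n then (\<Sum>j<n. A i j * v j) else 0)"

definition is_rep :: "nat \<Rightarrow> (real^2^2 \<Rightarrow> nat \<Rightarrow> nat \<Rightarrow> real) \<Rightarrow> bool" where
  "is_rep n \<rho> \<longleftrightarrow>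
     (\<forall>v\<in>vspace n. act n (\<rho> (mat 1)) v = v) \<and>
     (\<forall>g\<in>SL2. \<forall>h\<in>SL2. \<forall>v\<in>vspace n.
        act n (\<rho> (g ** h)) v = act n (\<rho> g) (act n (\<rho> h) v)) \<and>
     (\<forall>i<n. \<forall>j<n. continuous_on SL2 (\<lambda>g. \<rho> g i j))"

inductive poly_fun :: "nat \<Rightarrow> ((nat \<Rightarrow> real) \<Rightarrow> real) \<Rightarrow> bool" for n where
  pf_const: "poly_fun n (\<lambda>v. c)"
| pf_coord: "i < n \<Longrightarrow> poly_fun n (\<lambda>v. v i)"
| pf_add: "poly_fun n p \<Longrightarrow> poly_fun n q \<Longrightarrow> poly_fun n (\<lambda>v. p v + q v)"
| pf_mult: "poly_fun n p \<Longrightarrow> poly_fun n q \<Longrightarrow> poly_fun n (\<lambda>v. p v * q v)"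

definition poly_map :: "nat \<Rightarrow> nat \<Rightarrow> ((nat \<Rightarrow> real) \<Rightarrow> (nat \<Rightarrow> real)) \<Rightarrow> bool" where
  "poly_map n m P \<longleftrightarrow>
     (\<forall>v\<in>vspace n. P v \<in> vspace m) \<and> (\<forall>i<m. poly_fun n (\<lambda>v. P v i))"

end

theory Submission
  imports Defs
begin

definition ent :: "real^2^2 \<Rightarrow> nat \<Rightarrow> nat \<Rightarrow> real" where
  "ent g a b = g $ (if a = 0 then 1 else 2) $ (if b = 0 then 1 else 2)"

definition rho :: "real^2^2 \<Rightarrow> nat \<Rightarrow> nat \<Rightarrow> real" where
  "rho g i j = (if i < 2 \<and> j < 2 then ent g i j
     else if 2 \<le> i \<and> i < 4 \<and> 2 \<le> j \<and> j < 4 then ent g (i-2) (j-2) else 0)"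

definition sig :: "real^2^2 \<Rightarrow> nat \<Rightarrow> nat \<Rightarrow> real" where
  "sig g i j = (if i = j then 1 else 0)"

lemma sum4: "(\<Sum>j<(4::nat). f j) = f 0 + f 1 + f 2 + (f 3::real)"
  by (simp add: eval_nat_numeral)

lemma sum2': "(\<Sum>j<(2::nat). f j) = f 0 + (f 1::real)"
  by (simp add: eval_nat_numeral)

lemma act4: "act 4 (rho g) v = (\<lambda>i. if i = 0 then g$1$1 * v 0 + g$1$2 * v 1
   else if i = 1 then g$2$1 * v 0 + g$2$2 * v 1
   else if i = 2 then g$1$1 * v 2 + g$1$2 * v 3
   else if i = 3 then g$2$1 * v 2 + g$2$2 * v 3 else 0)"
  apply (rule ext)
  apply (simp add: act_def sum4 rho_def ent_def)
  done

lemma act_sig: "w \<in> vspace 2 \<Longrightarrow> act 2 (sig g) w = w"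
  apply (rule ext)
  apply (auto simp: act_def sum2' sig_def vspace_def)
  by (metis less_2_cases)

lemma mm2: "((g::real^2^2) ** h)$a$b = g$a$1*h$1$b + g$a$2*h$2$b"
  by (simp add: matrix_matrix_mult_def sum_2)

lemma rep_rho: "is_rep 4 rho"
  unfolding is_rep_def
proof (intro conjI ballI allI impI)
  fix v :: "nat \<Rightarrow> real" assume "v \<in> vspace 4"
  then show "act 4 (rho (mat 1)) v = v"
    apply (simp add: act4 mat_def vspace_def)
    apply (rule ext)
    subgoal for i by (cases "i < 4") (auto simp: eval_nat_numeral less_Suc_eq)
    done
next
  fix g h v assume "g \<in> SL2" "h \<in> SL2" "v \<in> vspace 4"
  show "act 4 (rho (g ** h)) v = act 4 (rho g) (act 4 (rho h) v)"
    by (rule ext) (simp add: act4 mm2 algebra_simps)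
next
  fix i j :: nat
  show "continuous_on SL2 (\<lambda>g. rho g i j)"
  proof -
    have c: "\<And>a b. continuous_on SL2 (\<lambda>g::real^2^2. g $ a $ b)" by (intro continuous_intros)
    show ?thesis
    proof (cases "i < 2 \<and> j < 2")
      case True then show ?thesis by (simp add: rho_def ent_def c)
    next
      case F1: False
      show ?thesis
      proof (cases "2 \<le> i \<and> i < 4 \<and> 2 \<le> j \<and> j < 4")
        case True then show ?thesis using F1 by (simp add: rho_def ent_def c)
      next
        case False then show ?thesis by (simp only: rho_def ent_def F1 False if_False continuous_on_const)
      qed
    qed
  qed
qed

lemma rep_sig: "is_rep 2 sig"
  unfolding is_rep_def using act_sig by (auto simp: sig_def)

lemma pf_cont: "poly_fun n p \<Longrightarrow> continuous_on UNIV (\<lambda>t::real. p (\<lambda>i. t * x i))"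
  by (induction rule: poly_fun.induct) (auto intro!: continuous_intros)

lemma scal_lim:
  assumes "poly_fun n p" "\<forall>t. t > 0 \<longrightarrow> p (\<lambda>i. t * x i) = p x"
  shows "p x = p (\<lambda>i. 0)"
proof -
  have "isCont (\<lambda>t::real. p (\<lambda>i. t * x i)) 0"
    using pf_cont[OF assms(1), of x] by (simp add: continuous_on_eq_continuous_at)
  then have l1: "((\<lambda>t::real. p (\<lambda>i. t * x i)) \<longlongrightarrow> p (\<lambda>i. 0)) (at_right 0)"
    by (simp add: isCont_def filterlim_at_split)
  have "eventually (\<lambda>t::real. p (\<lambda>i. t * x i) = p x) (at_right 0)"
    using eventually_at_right_less[of "0::real"] by (rule eventually_mono) (use assms(2) in blast)
  then have l2: "((\<lambda>t::real. p (\<lambda>i. t * x i)) \<longlongrightarrow> p x) (at_right 0)"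
    by (rule tendsto_eventually)
  show ?thesis using tendsto_unique[OF _ l2 l1] by simp
qed

lemma cont_coord [continuous_intros]: "continuous_on S (\<lambda>x::nat\<Rightarrow>real. x i)"
  by (rule continuous_on_subset[OF continuous_on_product_coordinates]) simp

lemma inj2:
  assumes "det (g::real^2^2) = 1" "g$1$1 * a + g$1$2 * b = 0" "g$2$1 * a + g$2$2 * b = 0"
  shows "a = 0 \<and> b = 0"
proof -
  have d: "g$1$1 * g$2$2 - g$1$2 * g$2$1 = 1" using assms(1) by (simp add: det_2)
  have "a = a * (g$1$1 * g$2$2 - g$1$2 * g$2$1)" using d by simp
  also have "\<dots> = g$2$2 * (g$1$1 * a + g$1$2 * b) - g$1$2 * (g$2$1 * a + g$2$2 * b)"
    by (simp add: algebra_simps)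
  finally have "a = 0" using assms by simp
  have "b = b * (g$1$1 * g$2$2 - g$1$2 * g$2$1)" using d by simp
  also have "\<dots> = g$1$1 * (g$2$1 * a + g$2$2 * b) - g$2$1 * (g$1$1 * a + g$1$2 * b)"
    by (simp add: algebra_simps)
  finally have "b = 0" using assms by simp
  with \<open>a = 0\<close> show ?thesis by simp
qed

definition gt :: "real \<Rightarrow> real^2^2" where
  "gt t = (\<chi> i j. if i = j then (if i = 1 then t else 1/t) else 0)"

lemma gt_SL2: "t > 0 \<Longrightarrow> gt t \<in> SL2"
  by (simp add: SL2_def det_2 gt_def)

definition x1 :: "nat \<Rightarrow> real" where "x1 = (\<lambda>i. if i = 0 then 1 else 0)"
definition x2 :: "nat \<Rightarrow> real" where "x2 = (\<lambda>i. if i = 2 then 1 else 0)"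

lemma gt_x1: "t > 0 \<Longrightarrow> act 4 (rho (gt t)) x1 = (\<lambda>i. t * x1 i)"
  by (rule ext) (simp add: act4 gt_def x1_def)
lemma gt_x2: "t > 0 \<Longrightarrow> act 4 (rho (gt t)) x2 = (\<lambda>i. t * x2 i)"
  by (rule ext) (simp add: act4 gt_def x2_def)

definition DD :: "(nat \<Rightarrow> real) set" where
  "DD = {v \<in> vspace 4. (v 2 = 0 \<and> v 3 = 0 \<and> (v 0 \<noteq> 0 \<or> v 1 \<noteq> 0)) \<or>
                      (v 0 = 0 \<and> v 1 = 0 \<and> (v 2 \<noteq> 0 \<or> v 3 \<noteq> 0))}"

definition NN :: "(nat \<Rightarrow> real) \<Rightarrow> real" where
  "NN v = (v 0)\<^sup>2 + (v 1)\<^sup>2 + (v 2)\<^sup>2 + (v 3)\<^sup>2"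

definition FF :: "(nat \<Rightarrow> real) \<Rightarrow> nat \<Rightarrow> real" where
  "FF v = (\<lambda>i. if i = 0 then ((v 0)\<^sup>2 + (v 1)\<^sup>2) / NN v
              else if i = 1 then ((v 2)\<^sup>2 + (v 3)\<^sup>2) / NN v else 0)"

lemma NN_pos: "v \<in> DD \<Longrightarrow> NN v \<noteq> 0"
  unfolding DD_def NN_def by (auto simp: add_nonneg_eq_0_iff)

lemma FF_1: "v 2 = 0 \<Longrightarrow> v 3 = 0 \<Longrightarrow> (v 0 \<noteq> 0 \<or> v 1 \<noteq> 0) \<Longrightarrow>
   FF v = (\<lambda>i. if i = 0 then 1 else 0)"
  unfolding FF_def NN_def by (rule ext) (auto simp: add_nonneg_eq_0_iff)

lemma FF_2: "v 0 = 0 \<Longrightarrow> v 1 = 0 \<Longrightarrow> (v 2 \<noteq> 0 \<or> v 3 \<noteq> 0) \<Longrightarrow>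
   FF v = (\<lambda>i. if i = 1 then 1 else 0)"
  unfolding FF_def NN_def by (rule ext) (auto simp: add_nonneg_eq_0_iff)

lemma DD_inv:
  assumes g: "g \<in> SL2" and v: "v \<in> DD"
  shows "act 4 (rho g) v \<in> DD \<and> FF (act 4 (rho g) v) = FF v"
proof -
  have d: "det g = 1" using g by (simp add: SL2_def)
  have vs: "act 4 (rho g) v \<in> vspace 4" by (simp add: act4 vspace_def)
  from v consider "v 2 = 0" "v 3 = 0" "v 0 \<noteq> 0 \<or> v 1 \<noteq> 0"
    | "v 0 = 0" "v 1 = 0" "v 2 \<noteq> 0 \<or> v 3 \<noteq> 0" unfolding DD_def by blast
  then show ?thesis
  proof cases
    case 1
    have "\<not> (g$1$1 * v 0 + g$1$2 * v 1 = 0 \<and> g$2$1 * v 0 + g$2$2 * v 1 = 0)"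
      using inj2[OF d, of "v 0" "v 1"] 1 by blast
    then show ?thesis using 1 vs
      by (auto simp: DD_def act4 FF_1)
  next
    case 2
    have "\<not> (g$1$1 * v 2 + g$1$2 * v 3 = 0 \<and> g$2$1 * v 2 + g$2$2 * v 3 = 0)"
      using inj2[OF d, of "v 2" "v 3"] 2 by blast
    then show ?thesis using 2 vs
      by (auto simp: DD_def act4 FF_2)
  qed
qed

lemma FF_cont: "continuous_on DD FF"
proof (rule continuous_on_coordinatewise_then_product)
  fix i :: nat
  have n: "\<And>v. v \<in> DD \<Longrightarrow> (v 0)\<^sup>2 + (v 1)\<^sup>2 + (v 2)\<^sup>2 + (v 3)\<^sup>2 \<noteq> 0"
    using NN_pos unfolding NN_def by blast
  show "continuous_on DD (\<lambda>v. FF v i)"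
    unfolding FF_def NN_def
    by (cases "i = 0"; cases "i = 1") (auto intro!: continuous_intros simp: n n[unfolded One_nat_def])
qed

lemma x1D: "x1 \<in> DD" by (simp add: DD_def x1_def vspace_def)
lemma x2D: "x2 \<in> DD" by (simp add: DD_def x2_def vspace_def)

theorem corollary1:
  shows "\<exists>(n::nat) (m::nat) \<rho> \<sigma> D F K.
    is_rep n \<rho> \<and> is_rep m \<sigma> \<and>
    D \<subseteq> vspace n \<and> (\<forall>g\<in>SL2. \<forall>v\<in>D. act n (\<rho> g) v \<in> D) \<and>
    (\<forall>v\<in>D. F v \<in> vspace m) \<and> continuous_on D F \<and>
    (\<forall>g\<in>SL2. \<forall>v\<in>D. F (act n (\<rho> g) v) = act m (\<sigma> g) (F v)) \<and>
    compact K \<and> K \<subseteq> D \<and>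
    \<not> (\<exists>(h :: nat \<Rightarrow> (nat \<Rightarrow> real) \<Rightarrow> real) P.
          (\<forall>k. poly_map n m (P k) \<and>
               (\<forall>g\<in>SL2. \<forall>v\<in>vspace n. P k (act n (\<rho> g) v) = act m (\<sigma> g) (P k v)) \<and>
               (\<forall>g\<in>SL2. \<forall>v\<in>D. h k (act n (\<rho> g) v) = h k v)) \<and>
          (\<forall>x\<in>K. \<forall>i. (\<lambda>k. h k x * P k x i) \<longlonglongrightarrow> F x i))"
proof (intro exI conjI)
  have Fv: "\<forall>v\<in>DD. FF v \<in> vspace 2" by (simp add: FF_def vspace_def)
  show "is_rep 4 rho" by (rule rep_rho)
  show "is_rep 2 sig" by (rule rep_sig)
  show "DD \<subseteq> vspace 4" by (auto simp: DD_def)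
  show "\<forall>g\<in>SL2. \<forall>v\<in>DD. act 4 (rho g) v \<in> DD" using DD_inv by blast
  show "\<forall>v\<in>DD. FF v \<in> vspace 2" by (rule Fv)
  show "continuous_on DD FF" by (rule FF_cont)
  show "\<forall>g\<in>SL2. \<forall>v\<in>DD. FF (act 4 (rho g) v) = act 2 (sig g) (FF v)"
    using DD_inv Fv act_sig by simp
  show "compact {x1, x2}" by simp
  show "{x1, x2} \<subseteq> DD" using x1D x2D by simp
  show "\<not> (\<exists>(h :: nat \<Rightarrow> (nat \<Rightarrow> real) \<Rightarrow> real) P.
          (\<forall>k. poly_map 4 2 (P k) \<and>
               (\<forall>g\<in>SL2. \<forall>v\<in>vspace 4. P k (act 4 (rho g) v) = act 2 (sig g) (P k v)) \<and>
               (\<forall>g\<in>SL2. \<forall>v\<in>DD. h k (act 4 (rho g) v) = h k v)) \<and>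
          (\<forall>x\<in>{x1, x2}. \<forall>i. (\<lambda>k. h k x * P k x i) \<longlonglongrightarrow> FF x i))"
  proof
    assume "\<exists>(h :: nat \<Rightarrow> (nat \<Rightarrow> real) \<Rightarrow> real) P.
          (\<forall>k. poly_map 4 2 (P k) \<and>
               (\<forall>g\<in>SL2. \<forall>v\<in>vspace 4. P k (act 4 (rho g) v) = act 2 (sig g) (P k v)) \<and>
               (\<forall>g\<in>SL2. \<forall>v\<in>DD. h k (act 4 (rho g) v) = h k v)) \<and>
          (\<forall>x\<in>{x1, x2}. \<forall>i. (\<lambda>k. h k x * P k x i) \<longlonglongrightarrow> FF x i)"
    then obtain h :: "nat \<Rightarrow> (nat \<Rightarrow> real) \<Rightarrow> real" and P where
      pm: "\<And>k. poly_map 4 2 (P k)" and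
      eq: "\<And>k g v. g \<in> SL2 \<Longrightarrow> v \<in> vspace 4 \<Longrightarrow> P k (act 4 (rho g) v) = act 2 (sig g) (P k v)" and
      lim: "\<And>x i. x \<in> {x1, x2} \<Longrightarrow> (\<lambda>k. h k x * P k x i) \<longlonglongrightarrow> FF x i"
      by blast
    have inv: "P k (act 4 (rho g) v) = P k v" if "g \<in> SL2" "v \<in> vspace 4" for k g v
      using eq[OF that] act_sig pm that unfolding poly_map_def by simp
    have x1v: "x1 \<in> vspace 4" and x2v: "x2 \<in> vspace 4" using x1D x2D by (auto simp: DD_def)
    have same: "P k x2 i = P k x1 i" if "i < 2" for k i
    proof -
      have pf: "poly_fun 4 (\<lambda>v. P k v i)" using pm that unfolding poly_map_def by blast
      have a: "P k x1 i = P k (\<lambda>i. 0) i"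
        using scal_lim[OF pf, of x1] inv[OF gt_SL2 x1v] gt_x1 by simp
      have b: "P k x2 i = P k (\<lambda>i. 0) i"
        using scal_lim[OF pf, of x2] inv[OF gt_SL2 x2v] gt_x2 by simp
      show ?thesis using a b by simp
    qed
    have F1: "FF x1 = (\<lambda>i. if i = 0 then 1 else 0)" by (rule FF_1) (auto simp: x1_def)
    have F2: "FF x2 = (\<lambda>i. if i = 1 then 1 else 0)" by (rule FF_2) (auto simp: x2_def)
    have l10: "(\<lambda>k. h k x1 * P k x1 0) \<longlonglongrightarrow> 1" using lim[of x1 0] F1 by simp
    have l11: "(\<lambda>k. h k x1 * P k x1 1) \<longlonglongrightarrow> 0" using lim[of x1 1] F1 by simp
    have l20: "(\<lambda>k. h k x2 * P k x1 0) \<longlonglongrightarrow> 0" using lim[of x2 0] F2 same[of 0] by simp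
    have l21: "(\<lambda>k. h k x2 * P k x1 1) \<longlonglongrightarrow> 1" using lim[of x2 1] F2 same[of 1] by simp
    have "(\<lambda>k. (h k x1 * P k x1 0) * (h k x2 * P k x1 1) - (h k x1 * P k x1 1) * (h k x2 * P k x1 0))
           \<longlonglongrightarrow> 1 * 1 - 0 * 0"
      by (intro tendsto_intros l10 l11 l20 l21)
    moreover have "(\<lambda>k. (h k x1 * P k x1 0) * (h k x2 * P k x1 1) - (h k x1 * P k x1 1) * (h k x2 * P k x1 0))
           = (\<lambda>k. 0)" by (simp add: algebra_simps)
    ultimately have "(\<lambda>k. 0::real) \<longlonglongrightarrow> 1" by simp
    then show False using LIMSEQ_unique[OF tendsto_const] by fastforce
  qed
qed

end
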